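(* Let $v\in M_N(\mathbb{C})$ and let $g(t)=e^{tv}$, $t\in[0,1]$. Then $g$ is an extremal of the $p$-energy functional, i.e. its left-translated velocity $g^{-1}(t)\dot g(t)$ satisfies the Euler–Lagrange equation $$\frac{d}{dt}\, v(t)(v(t)^*v(t))^{n-1}=(v(t)^*v(t))^n-(v(t)v(t)^* )^n,\qquad v(t)=g^{-1}(t)\dot g(t),$$ if and only if $v$ is normal, i.e. $vv^*=v^*v$.
   Context: $p=2n\ge 2$ is a fixed even integer. $G=GL(N)$ is the group of invertible complex $N\times N$ matrices, an open subset of $\mathcal A=M_N(\mathbb C)$. $\tau(x)=\frac1N\operatorname{Re}\operatorname{Tr}(x)$ is the normalized real part of the trace, $|x|=(x^*x)^{1/2}$, and $\|x\|_p=\tau(|x|^p)^{1/p}$. For a smooth curve $g:[0,1]\to G$, the $p$-energy is $\mathcal E_p(g)=\int_0^1\tau\big((v^*v)^n\big)\,dt$ with $v=g^{-1}\dot g$; the displayed Euler–Lagrange equation is the condition for $g$ to be a critical point of $\mathcal E_p$ under variations with fixed endpoints. *)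

theory Defs
  imports "HOL-Analysis.Analysis"
begin

text \<open>N x N complex matrices are modelled as complex^'N^'N, with 'N a finite index type
  (so N = CARD('N)). Matrix product is **, identity is mat 1, inverse is matrix_inv.\<close>

definition cadj :: "complex^'n^'m \<Rightarrow> complex^'m^'n" where
  "cadj A = (\<chi> i j. cnj (A $ j $ i))"

primrec mpow :: "complex^'n^'n \<Rightarrow> nat \<Rightarrow> complex^'n^'n" where
  "mpow A 0 = mat 1"
| "mpow A (Suc k) = A ** mpow A k"

text \<open>Matrix exponential via its power series (converges in the finite-dimensional Banach space).\<close>
definition mexp :: "complex^'n^'n \<Rightarrow> complex^'n^'n" where
  "mexp A = (\<Sum>k. (1 / fact k) *\<^sub>R mpow A k)"

definition normal_mat :: "complex^'n^'n \<Rightarrow> bool" where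
  "normal_mat A \<longleftrightarrow> A ** cadj A = cadj A ** A"

definition left_vel :: "(real \<Rightarrow> complex^'n^'n) \<Rightarrow> real \<Rightarrow> complex^'n^'n" where
  "left_vel g t = matrix_inv (g t) ** vector_derivative g (at t within {0..1})"

text \<open>Euler--Lagrange equation of the p-energy, p = 2n, for a curve g on [0,1]:
  d/dt [ w (w^* w)^(n-1) ] = (w^* w)^n - (w w^*)^n with w = g^{-1} g'.\<close>
definition pEL :: "nat \<Rightarrow> (real \<Rightarrow> complex^'n^'n) \<Rightarrow> bool" where
  "pEL n g \<longleftrightarrow> (\<forall>t\<in>{0..1}.
     ((\<lambda>s. left_vel g s ** mpow (cadj (left_vel g s) ** left_vel g s) (n - 1))
       has_vector_derivative
        (mpow (cadj (left_vel g t) ** left_vel g t) n - mpow (left_vel g t ** cadj (left_vel g t)) n))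
       (at t within {0..1}))"

end

theory Submission
  imports Defs
begin


typedef (overloaded) 'a op = "UNIV :: ('a::euclidean_space \<Rightarrow>\<^sub>L 'a) set" morphisms opr Abs_op by simp
setup_lifting type_definition_op

instantiation op :: (euclidean_space) real_normed_algebra_1
begin
lift_definition zero_op :: "'a op" is 0 .
lift_definition one_op :: "'a op" is id_blinfun .
lift_definition plus_op :: "'a op \<Rightarrow> 'a op \<Rightarrow> 'a op" is "(+)" .
lift_definition minus_op :: "'a op \<Rightarrow> 'a op \<Rightarrow> 'a op" is "(-)" .
lift_definition uminus_op :: "'a op \<Rightarrow> 'a op" is "uminus" .
lift_definition times_op :: "'a op \<Rightarrow> 'a op \<Rightarrow> 'a op" is "blinfun_compose" .
lift_definition scaleR_op :: "real \<Rightarrow> 'a op \<Rightarrow> 'a op" is "scaleR" .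
lift_definition norm_op :: "'a op \<Rightarrow> real" is "norm" .
definition dist_op :: "'a op \<Rightarrow> 'a op \<Rightarrow> real" where "dist_op a b = norm (a - b)"
definition sgn_op :: "'a op \<Rightarrow> 'a op" where "sgn_op x = scaleR (inverse (norm x)) x"
definition uniformity_op :: "('a op \<times> 'a op) filter" where
  "uniformity_op = (INF e\<in>{0 <..}. principal {(x, y). dist x y < e})"
definition open_op :: "'a op set \<Rightarrow> bool" where
  "open_op S = (\<forall>x\<in>S. \<forall>\<^sub>F (x', y) in uniformity. x' = x \<longrightarrow> y \<in> S)"
instance
proof
  fix a b c :: "'a op" and r s :: real
  show "a + b + c = a + (b + c)" by transfer (simp add: algebra_simps)
  show "a + b = b + a" by transfer (simp add: algebra_simps)
  show "0 + a = a" by transfer simp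
  show "- a + a = 0" by transfer simp
  show "a - b = a + - b" by transfer simp
  show "r *\<^sub>R (a + b) = r *\<^sub>R a + r *\<^sub>R b" by transfer (simp add: algebra_simps)
  show "(r + s) *\<^sub>R a = r *\<^sub>R a + s *\<^sub>R a" by transfer (simp add: algebra_simps)
  show "r *\<^sub>R s *\<^sub>R a = (r * s) *\<^sub>R a" by transfer simp
  show "1 *\<^sub>R a = a" by transfer simp
  show "a * b * c = a * (b * c)" by transfer (auto intro: blinfun_eqI)
  show "(a + b) * c = a * c + b * c" by transfer (auto intro: blinfun_eqI simp: blinfun.bilinear_simps)
  show "a * (b + c) = a * b + a * c" by transfer (auto intro: blinfun_eqI simp: blinfun.bilinear_simps)
  show "r *\<^sub>R a * b = r *\<^sub>R (a * b)" by transfer (auto intro: blinfun_eqI simp: blinfun.bilinear_simps)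
  show "a * r *\<^sub>R b = r *\<^sub>R (a * b)" by transfer (auto intro: blinfun_eqI simp: blinfun.bilinear_simps)
  show "1 * a = a" by transfer (auto intro: blinfun_eqI)
  show "a * 1 = a" by transfer (auto intro: blinfun_eqI)
  show "(0::'a op) \<noteq> 1" 
  proof transfer
    obtain x :: 'a where "x \<noteq> 0" using nonzero_Basis by blast
    then show "0 \<noteq> (id_blinfun :: 'a \<Rightarrow>\<^sub>L 'a)" by (metis blinfun.zero_left blinfun_apply_id_blinfun)
  qed
  show "norm (a * b) \<le> norm a * norm b" by transfer (rule norm_blinfun_compose)
  show "norm (1::'a op) = 1" by transfer simp
  show "dist a b = norm (a - b)" by (simp add: dist_op_def)
  show "sgn a = inverse (norm a) *\<^sub>R a" by (simp add: sgn_op_def)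
  show "(uniformity :: ('a op \<times> 'a op) filter) = (INF e\<in>{0 <..}. principal {(x, y). dist x y < e})" by (simp add: uniformity_op_def)
  fix U :: "'a op set"
  show "open U = (\<forall>x\<in>U. \<forall>\<^sub>F (x', y) in uniformity. x' = x \<longrightarrow> y \<in> U)" by (simp add: open_op_def)
  show "(norm a = 0) = (a = 0)" by transfer simp
  show "norm (a + b) \<le> norm a + norm b" by transfer (rule norm_triangle_ineq)
  show "norm (r *\<^sub>R a) = \<bar>r\<bar> * norm a" by transfer simp
qed
end

lemma dist_opr: "dist a b = dist (opr a) (opr b)"
  by (simp add: dist_op_def dist_norm norm_op.rep_eq minus_op.rep_eq)

instance op :: (euclidean_space) banach
proof
  fix X :: "nat \<Rightarrow> 'a op" assume "Cauchy X"
  then have "Cauchy (\<lambda>n. opr (X n))" by (simp add: Cauchy_def dist_opr)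
  then obtain L where L: "(\<lambda>n. opr (X n)) \<longlonglongrightarrow> L" using convergent_eq_Cauchy by blast
  have "X \<longlonglongrightarrow> Abs_op L"
    using L unfolding tendsto_iff by (simp add: dist_opr Abs_op_inverse)
  then show "convergent X" by (auto simp: convergent_def)
qed



lemma mv_scaleR: "(A::complex^'n^'m) *v (r *\<^sub>R x) = r *\<^sub>R (A *v x)"
  by (simp add: vec_eq_iff matrix_vector_mult_def scaleR_sum_right mult.assoc mult.left_commute)

lemma bl_mv: "bounded_linear (\<lambda>x::complex^'n. (A::complex^'n^'m) *v x)"
  by (rule linear_conv_bounded_linear[THEN iffD1], rule linearI)
     (simp_all add: matrix_vector_right_distrib mv_scaleR)

definition phi :: "complex^'n^'n \<Rightarrow> (complex^'n) op" where
  "phi A = Abs_op (Blinfun (\<lambda>x. A *v x))"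

lemma opr_phi: "blinfun_apply (opr (phi A)) x = A *v x"
  unfolding phi_def by (simp add: Abs_op_inverse bounded_linear_Blinfun_apply[OF bl_mv])

lemma opr_eqI: "(\<And>x. blinfun_apply (opr a) x = blinfun_apply (opr b) x) \<Longrightarrow> a = b"
  by (metis blinfun_eqI opr_inject)

lemma phi_mult: "phi (A ** B) = phi A * phi B"
  by (rule opr_eqI) (simp add: opr_phi times_op.rep_eq matrix_vector_mul_assoc)

lemma phi_one: "phi (mat 1) = 1"
  by (rule opr_eqI) (simp add: opr_phi one_op.rep_eq)

lemma phi_add: "phi (A + B) = phi A + phi B"
  by (rule opr_eqI) (simp add: opr_phi plus_op.rep_eq blinfun.bilinear_simps matrix_vector_mult_add_rdistrib)

lemma phi_scaleR: "phi (r *\<^sub>R A) = r *\<^sub>R phi A"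
  by (rule opr_eqI) (simp add: opr_phi scaleR_op.rep_eq blinfun.bilinear_simps vec_eq_iff matrix_vector_mult_def scaleR_sum_right)

lemma bl_phi: "bounded_linear (phi :: complex^'n^'n \<Rightarrow> _)"
  by (rule linear_conv_bounded_linear[THEN iffD1], rule linearI)
     (simp_all add: phi_add phi_scaleR)

lemma norm_axis_c: "norm (axis j (c::complex)) = norm c"
proof -
  have "(\<Sum>i\<in>UNIV. (norm (axis j c $ i))\<^sup>2) = (\<Sum>i\<in>UNIV. if i = j then (norm c)\<^sup>2 else 0)"
    by (rule sum.cong) (auto simp: axis_def)
  then show ?thesis by (simp add: norm_vec_def L2_set_def)
qed

definition psi :: "(complex^'n) op \<Rightarrow> complex^'n^'n" where
  "psi f = (\<chi> i j. (blinfun_apply (opr f) (axis j 1)) $ i)"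

lemma psi_phi: "psi (phi A) = A"
  by (simp add: psi_def opr_phi vec_eq_iff matrix_vector_mult_def axis_def if_distrib cong: if_cong)

lemma bl_psi: "bounded_linear (psi :: (complex^'n) op \<Rightarrow> _)"
proof
  fix a b :: "(complex^'n) op" and r :: real
  show "psi (a + b) = psi a + psi b"
    by (simp add: psi_def vec_eq_iff plus_op.rep_eq blinfun.bilinear_simps)
  show "psi (r *\<^sub>R a) = r *\<^sub>R psi a"
    by (simp add: psi_def vec_eq_iff scaleR_op.rep_eq blinfun.bilinear_simps)
  show "\<exists>K. \<forall>x::(complex^'n) op. norm (psi x) \<le> norm x * K"
  proof (rule exI[where x="real CARD('n) * real CARD('n)"], rule allI)
    fix f :: "(complex^'n) op"
    have "norm (psi f) \<le> (\<Sum>i\<in>UNIV. norm (psi f $ i))" by (simp add: norm_vec_def L2_set_le_sum)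
    also have "\<dots> \<le> (\<Sum>i\<in>(UNIV::'n set). \<Sum>j\<in>(UNIV::'n set). norm f)"
    proof (rule sum_mono)
      fix i
      have "norm (psi f $ i) \<le> (\<Sum>j\<in>UNIV. norm (psi f $ i $ j))"
        by (simp add: norm_vec_def L2_set_le_sum)
      also have "\<dots> \<le> (\<Sum>j\<in>(UNIV::'n set). norm f)"
      proof (rule sum_mono)
        fix j
        have "norm (psi f $ i $ j) \<le> norm (blinfun_apply (opr f) (axis j 1))"
          unfolding psi_def vec_lambda_beta by (rule Finite_Cartesian_Product.norm_nth_le)
        also have "\<dots> \<le> norm (opr f) * norm (axis j (1::complex))" by (rule norm_blinfun)
        finally show "norm (psi f $ i $ j) \<le> norm f" by (simp add: norm_op.rep_eq norm_axis_c)
      qed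
      finally show "norm (psi f $ i) \<le> (\<Sum>j\<in>(UNIV::'n set). norm f)" .
    qed
    finally have *: "norm (psi f) \<le> (\<Sum>i\<in>(UNIV::'n set). \<Sum>j\<in>(UNIV::'n set). norm f)" .
    show "norm (psi f) \<le> norm f * (real CARD('n) * real CARD('n))" using * by (simp add: mult_ac)
  qed
qed

lemma psi_scaleR: "psi (r *\<^sub>R a) = r *\<^sub>R psi a"
  by (simp add: psi_def vec_eq_iff scaleR_op.rep_eq blinfun.bilinear_simps)

lemma phi_mpow: "phi (mpow A k) = phi A ^ k"
  by (induct k) (simp_all add: phi_one phi_mult)

lemma mexp_sums: "(\<lambda>k. (1 / fact k) *\<^sub>R mpow A k) sums psi (exp (phi A))"
proof -
  have "(\<lambda>k. psi ((1 / fact k) *\<^sub>R phi A ^ k)) sums psi (exp (phi A))"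
    using bounded_linear.sums[OF bl_psi exp_converges[of "phi A"]] by (simp add: divide_inverse_commute)
  then show ?thesis
    by (simp add: psi_scaleR phi_mpow[symmetric] psi_phi)
qed

lemma phi_mexp: "phi (mexp A) = exp (phi A)"
proof -
  have "(\<lambda>k. phi ((1 / fact k) *\<^sub>R mpow A k)) sums phi (mexp A)"
    unfolding mexp_def using mexp_sums[of A] by (intro bounded_linear.sums[OF bl_phi]) (simp add: sums_iff)
  then have "(\<lambda>k. (1 / fact k) *\<^sub>R phi A ^ k) sums phi (mexp A)"
    by (simp add: phi_scaleR phi_mpow)
  moreover have "(\<lambda>k. (1 / fact k) *\<^sub>R phi A ^ k) sums exp (phi A)"
    using exp_converges[of "phi A"] by (simp add: divide_inverse_commute)
  ultimately show ?thesis using sums_unique2 by blast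
qed

lemma phi_inj: "phi A = phi B \<Longrightarrow> A = B"
  by (metis psi_phi)

lemma mexp_deriv: "((\<lambda>t. mexp (t *\<^sub>R v)) has_vector_derivative (mexp (t *\<^sub>R v) ** v)) (at t within S)"
proof -
  have e: "mexp (s *\<^sub>R v) = psi (exp (s *\<^sub>R phi v))" for s
    by (metis psi_phi phi_mexp phi_scaleR)
  have "((\<lambda>t. psi (exp (t *\<^sub>R phi v))) has_vector_derivative psi (exp (t *\<^sub>R phi v) * phi v)) (at t within S)"
    using bounded_linear.has_derivative[OF bl_psi exp_scaleR_has_vector_derivative_right[unfolded has_vector_derivative_def]]
    unfolding has_vector_derivative_def by (simp add: psi_scaleR)
  moreover have "psi (exp (t *\<^sub>R phi v) * phi v) = mexp (t *\<^sub>R v) ** v"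
    by (metis psi_phi phi_mexp phi_scaleR phi_mult)
  ultimately show ?thesis by (simp add: e)
qed

lemma mexp_inv: "mexp (t *\<^sub>R v) ** mexp ((-t) *\<^sub>R v) = mat 1" "mexp ((-t) *\<^sub>R v) ** mexp (t *\<^sub>R v) = mat 1"
proof -
  have c: "(t *\<^sub>R phi v) * ((-t) *\<^sub>R phi v) = ((-t) *\<^sub>R phi v) * (t *\<^sub>R phi v)" by simp
  have z: "t *\<^sub>R phi v + (-t) *\<^sub>R phi v = 0" "(-t) *\<^sub>R phi v + t *\<^sub>R phi v = 0"
    by (simp_all add: scaleR_left_distrib[symmetric])
  have "phi (mexp (t *\<^sub>R v) ** mexp ((-t) *\<^sub>R v)) = phi (mat 1)"
    by (simp add: phi_mult phi_mexp phi_scaleR phi_one exp_add_commuting[OF c, symmetric] z del: scaleR_minus_left)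
  then show "mexp (t *\<^sub>R v) ** mexp ((-t) *\<^sub>R v) = mat 1" by (rule phi_inj)
  have "phi (mexp ((-t) *\<^sub>R v) ** mexp (t *\<^sub>R v)) = phi (mat 1)"
    by (simp add: phi_mult phi_mexp phi_scaleR phi_one exp_add_commuting[OF c[symmetric], symmetric] z del: scaleR_minus_left)
  then show "mexp ((-t) *\<^sub>R v) ** mexp (t *\<^sub>R v) = mat 1" by (rule phi_inj)
qed

lemma matrix_inv_left': "A ** B = mat 1 \<Longrightarrow> B ** A = mat 1 \<Longrightarrow> matrix_inv A ** A = (mat 1 :: 'a::semiring_1^'n^'n)"
  unfolding matrix_inv_def by (rule someI2[where a=B]) auto

lemma left_vel_exp: "t \<in> {0..1} \<Longrightarrow> left_vel (\<lambda>t. mexp (t *\<^sub>R v)) t = v"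
proof -
  assume t: "t \<in> {0..1}"
  have "vector_derivative (\<lambda>t. mexp (t *\<^sub>R v)) (at t within {0..1}) = mexp (t *\<^sub>R v) ** v"
    using vector_derivative_within_closed_interval[of 0 1 t, OF _ t mexp_deriv] by simp
  then show ?thesis
    unfolding left_vel_def by (simp add: matrix_mul_assoc matrix_inv_left'[OF mexp_inv])
qed



type_synonym 'n cm = "complex^'n^'n"

lemma mm_rdistrib: "((A::('n::finite) cm) + B) ** C = A ** C + B ** C"
  by (simp add: vec_eq_iff matrix_matrix_mult_def sum.distrib ring_distribs)
lemma mm_ldistrib: "(A::('n::finite) cm) ** (B + C) = A ** B + A ** C"
  by (simp add: vec_eq_iff matrix_matrix_mult_def sum.distrib ring_distribs)
lemma mm_rdiff: "((A::('n::finite) cm) - B) ** C = A ** C - B ** C"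
  by (simp add: vec_eq_iff matrix_matrix_mult_def sum_subtractf ring_distribs)
lemma mm_ldiff: "(A::('n::finite) cm) ** (B - C) = A ** B - A ** C"
  by (simp add: vec_eq_iff matrix_matrix_mult_def sum_subtractf ring_distribs)

lemma mm_sum_right: "(\<Sum>k\<in>S. (f k :: ('n::finite) cm)) ** (B::('n::finite) cm) = (\<Sum>k\<in>S. f k ** B)"
  by (induct S rule: infinite_finite_induct) (simp_all add: mm_rdistrib)
lemma mm_sum_left: "(B::('n::finite) cm) ** (\<Sum>k\<in>S. (f k :: ('n::finite) cm)) = (\<Sum>k\<in>S. B ** f k)"
  by (induct S rule: infinite_finite_induct) (simp_all add: mm_ldistrib)

definition tr :: "('n::finite) cm \<Rightarrow> complex" where "tr M = (\<Sum>i\<in>UNIV. M $ i $ i)"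

lemma tr_sum: "tr (\<Sum>k\<in>S. f k) = (\<Sum>k\<in>S. tr (f k))"
  by (induct S rule: infinite_finite_induct) (simp_all add: tr_def sum.distrib)

lemma tr_comm: "tr ((A::('n::finite) cm) ** B) = tr (B ** A)"
  unfolding tr_def matrix_matrix_mult_def
  by (simp, subst sum.swap) (simp add: mult.commute)

lemma cadj_mult: "cadj ((A::('n::finite) cm) ** B) = cadj B ** cadj A"
  by (simp add: cadj_def vec_eq_iff matrix_matrix_mult_def mult.commute)
lemma cadj_cadj: "cadj (cadj (A::('n::finite) cm)) = A"
  by (simp add: cadj_def vec_eq_iff)
lemma cadj_diff: "cadj ((A::('n::finite) cm) - B) = cadj A - cadj B"
  by (simp add: cadj_def vec_eq_iff)
lemma cadj_one: "cadj (mat 1 :: ('n::finite) cm) = mat 1"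
  by (simp add: cadj_def vec_eq_iff mat_def)
lemma cadj_zero: "cadj (0 :: ('n::finite) cm) = 0"
  by (simp add: cadj_def vec_eq_iff)

lemma mpow_add: "mpow (A::('n::finite) cm) (a + b) = mpow A a ** mpow A b"
  by (induct a) (simp_all add: matrix_mul_assoc)
lemma mpow_Suc': "mpow (A::('n::finite) cm) (Suc k) = mpow A k ** A"
  using mpow_add[of A k 1] by simp
lemma mpow_comm: "mpow (A::('n::finite) cm) k ** A = A ** mpow A k"
  by (metis mpow.simps(2) mpow_Suc')
lemma cadj_mpow: "cadj (mpow (A::('n::finite) cm) k) = mpow (cadj A) k"
  by (induct k) (simp_all add: cadj_one cadj_mult mpow_Suc' mpow_comm)

lemma tr_self: "tr (cadj M ** (M::('n::finite) cm)) = of_real (\<Sum>i\<in>UNIV. \<Sum>k\<in>UNIV. (cmod (M $ k $ i))\<^sup>2)"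
proof -
  have c: "cnj z * z = of_real ((cmod z)\<^sup>2)" for z using complex_norm_square[of z] by (simp add: mult.commute)
  show ?thesis unfolding tr_def matrix_matrix_mult_def cadj_def by (simp add: c of_real_sum)
qed

lemma fro_zero: "cadj M ** (M::('n::finite) cm) = 0 \<Longrightarrow> M = 0"
proof -
  assume h: "cadj M ** M = 0"
  have "of_real (\<Sum>i\<in>UNIV. \<Sum>k\<in>UNIV. (cmod (M $ k $ i))\<^sup>2) = (0::complex)"
    using tr_self[of M] h by (simp add: tr_def)
  then have "(\<Sum>i\<in>UNIV. \<Sum>k\<in>UNIV. (cmod (M $ k $ i))\<^sup>2) = 0" by (simp only: of_real_eq_0_iff)
  then have "\<forall>i k. (cmod (M $ k $ i))\<^sup>2 = 0"
    by (simp add: sum_nonneg_eq_0_iff sum_nonneg)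
  then show "M = 0" by (simp add: vec_eq_iff)
qed

lemma sq_factor: "\<exists>A::('n::finite) cm. mpow (cadj w ** (w::('n::finite) cm)) k = cadj A ** A"
proof -
  let ?P = "cadj w ** w"
  have hP: "cadj ?P = ?P" by (simp add: cadj_mult cadj_cadj)
  obtain a where "k = 2 * a \<or> k = 2 * a + 1" by (metis oddE evenE)
  then show ?thesis
  proof
    assume k: "k = 2 * a"
    have "mpow ?P k = cadj (mpow ?P a) ** mpow ?P a"
      by (simp add: k cadj_mpow hP mpow_add[symmetric] mult_2)
    then show ?thesis by blast
  next
    assume k: "k = 2 * a + 1"
    have "cadj (w ** mpow ?P a) ** (w ** mpow ?P a) = mpow ?P a ** ?P ** mpow ?P a"
      by (simp add: cadj_mult cadj_mpow hP matrix_mul_assoc cadj_cadj)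
    also have "\<dots> = mpow ?P (Suc a + a)" by (simp only: mpow_add mpow_Suc')
    also have "\<dots> = mpow ?P k" by (simp add: k mult_2)
    finally show ?thesis by metis
  qed
qed

lemma kernel: "cadj H = (H::('n::finite) cm) \<Longrightarrow> mpow H k ** (X::'n cm) = 0 \<Longrightarrow> H ** X = 0"
proof (induct k)
  case 0 then show ?case by simp
next
  case (Suc k)
  show ?case
  proof (cases k)
    case 0 then show ?thesis using Suc by simp
  next
    case (Suc j)
    let ?M = "mpow H k ** X"
    have "cadj ?M ** ?M = cadj X ** (mpow H k ** mpow H k) ** X"
      by (simp add: cadj_mult cadj_mpow Suc.prems matrix_mul_assoc)
    also have "mpow H k ** mpow H k = mpow H j ** mpow H (Suc k)"
      by (simp only: mpow_add[symmetric]) (simp add: Suc)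
    finally have "cadj ?M ** ?M = 0"
      using Suc.prems by (simp add: matrix_mul_assoc[symmetric])
    then have "?M = 0" by (rule fro_zero)
    then show ?thesis using Suc.hyps Suc.prems by simp
  qed
qed

lemma tele: "mpow (P::('n::finite) cm) n - mpow Q n = (\<Sum>k<n. mpow P k ** (P - Q) ** mpow Q (n - 1 - k))"
proof (induct n)
  case 0 then show ?case by simp
next
  case (Suc n)
  have "(\<Sum>k<n. mpow P k ** (P - Q) ** mpow Q (Suc n - 1 - k))
      = (\<Sum>k<n. mpow P k ** (P - Q) ** mpow Q (n - 1 - k) ** Q)"
  proof (rule sum.cong)
    fix k assume "k \<in> {..<n}"
    then have "Suc n - 1 - k = Suc (n - 1 - k)" by auto
    then show "mpow P k ** (P - Q) ** mpow Q (Suc n - 1 - k) = mpow P k ** (P - Q) ** mpow Q (n - 1 - k) ** Q"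
      by (metis mpow_Suc' matrix_mul_assoc)
  qed simp
  also have "\<dots> = (mpow P n - mpow Q n) ** Q" by (simp add: Suc mm_sum_right)
  finally have e: "(\<Sum>k<n. mpow P k ** (P - Q) ** mpow Q (Suc n - 1 - k)) = (mpow P n - mpow Q n) ** Q" .
  have "(\<Sum>k<Suc n. mpow P k ** (P - Q) ** mpow Q (Suc n - 1 - k))
     = (\<Sum>k<n. mpow P k ** (P - Q) ** mpow Q (Suc n - 1 - k)) + mpow P n ** (P - Q) ** mpow Q 0"
    by simp
  also have "\<dots> = (mpow P n - mpow Q n) ** Q + mpow P n ** (P - Q)" unfolding e by simp
  also have "\<dots> = mpow P n ** P - mpow Q n ** Q" by (simp add: mm_rdiff mm_ldiff)
  also have "\<dots> = mpow P (Suc n) - mpow Q (Suc n)" by (simp only: mpow_Suc')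
  finally show ?case by simp
qed

lemma normal_from_pow:
  assumes "mpow (cadj v ** v) n = mpow (v ** cadj (v::('n::finite) cm)) n" "n \<ge> 1"
  shows "v ** cadj v = cadj v ** v"
proof -
  define P where "P = cadj v ** v"
  define Q where "Q = v ** cadj v"
  define D where "D = P - Q"
  have hP: "cadj P = P" "cadj Q = Q" "cadj D = D"
    by (simp_all add: P_def Q_def D_def cadj_mult cadj_cadj cadj_diff)
  have Qf: "\<exists>C::'n cm. mpow Q m = cadj C ** C" for m
    using sq_factor[of "cadj v" m] by (simp add: Q_def cadj_cadj)
  have Pf: "\<exists>A::'n cm. mpow P m = cadj A ** A" for m
    using sq_factor[of v m] by (simp add: P_def)
  have pos: "0 \<le> Re (tr (D ** (mpow P k ** D ** mpow Q m))) \<and>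
     (Re (tr (D ** (mpow P k ** D ** mpow Q m))) = 0 \<longrightarrow> mpow P k ** D ** mpow Q m = 0)" for k m
  proof -
    obtain A :: "'n cm" where A: "mpow P k = cadj A ** A" using Pf by blast
    obtain C :: "'n cm" where C: "mpow Q m = cadj C ** C" using Qf by blast
    define M where "M = A ** D ** cadj C"
    have cM: "cadj M = C ** D ** cadj A"
      by (simp add: M_def cadj_mult cadj_cadj hP matrix_mul_assoc)
    have "tr (D ** (mpow P k ** D ** mpow Q m)) = tr ((D ** cadj A ** A ** D ** cadj C) ** C)"
      by (simp add: A C matrix_mul_assoc)
    also have "\<dots> = tr (C ** (D ** cadj A ** A ** D ** cadj C))" by (rule tr_comm)
    also have "\<dots> = tr (cadj M ** M)" by (simp only: cM) (simp add: M_def matrix_mul_assoc)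
    finally have e: "tr (D ** (mpow P k ** D ** mpow Q m)) = of_real (\<Sum>i\<in>UNIV. \<Sum>k\<in>UNIV. (cmod (M $ k $ i))\<^sup>2)"
      by (simp add: tr_self)
    have "0 \<le> (\<Sum>i\<in>UNIV. \<Sum>k\<in>UNIV. (cmod (M $ k $ i))\<^sup>2)" by (simp add: sum_nonneg)
    moreover have "M = 0" if "(\<Sum>i\<in>UNIV. \<Sum>k\<in>UNIV. (cmod (M $ k $ i))\<^sup>2) = 0"
      using that by (simp add: sum_nonneg_eq_0_iff sum_nonneg vec_eq_iff)
    moreover have "mpow P k ** D ** mpow Q m = cadj A ** M ** C"
      by (simp add: A C M_def matrix_mul_assoc)
    moreover have r: "Re (tr (D ** (mpow P k ** D ** mpow Q m))) = (\<Sum>i\<in>UNIV. \<Sum>k\<in>UNIV. (cmod (M $ k $ i))\<^sup>2)"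
      by (simp only: e Re_complex_of_real)
    ultimately show ?thesis by (simp only: r) auto
  qed
  have "tr (D ** (mpow P n - mpow Q n)) = (\<Sum>k<n. tr (D ** (mpow P k ** D ** mpow Q (n - 1 - k))))"
    by (simp add: tele[of P n Q, folded D_def] mm_sum_left tr_sum)
  moreover have "mpow P n - mpow Q n = 0" using assms(1) by (simp add: P_def Q_def)
  ultimately have "(\<Sum>k<n. Re (tr (D ** (mpow P k ** D ** mpow Q (n - 1 - k))))) = 0"
    by (metis Re_sum times0_right tr_sum sum.empty zero_complex.sel(1) tr_def) 
  then have z: "\<forall>k\<in>{..<n}. Re (tr (D ** (mpow P k ** D ** mpow Q (n - 1 - k)))) = 0"
    using pos by (simp add: sum_nonneg_eq_0_iff)
  have "mpow P (n - 1) ** D ** mpow Q 0 = 0"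
    using z[rule_format, of "n - 1"] pos[of "n - 1" 0] assms(2) by simp
  then have PD: "P ** D = 0" by (intro kernel[of P "n - 1"]) (simp_all add: hP)
  have "mpow P 0 ** D ** mpow Q (n - 1) = 0"
    using z[rule_format, of 0] pos[of 0 "n - 1"] assms(2) by simp
  then have "cadj (D ** mpow Q (n - 1)) = 0" by (simp add: cadj_zero)
  then have "mpow Q (n - 1) ** D = 0" by (simp add: cadj_mult cadj_mpow hP)
  then have QD: "Q ** D = 0" by (intro kernel[of Q "n - 1"]) (simp_all add: hP)
  have "D ** D = P ** D - Q ** D" by (metis D_def mm_rdiff)
  then have "cadj D ** D = 0" using PD QD hP(3) by simp
  then have "D = 0" by (rule fro_zero)
  then show ?thesis by (simp add: D_def P_def Q_def)
qed



theorem mainTheorem1: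
  fixes v :: "complex^'N^'N" and n :: nat
  assumes "n \<ge> 1"
  shows "pEL n (\<lambda>t. mexp (t *\<^sub>R v)) \<longleftrightarrow> normal_mat v"
proof -
  define g where "g = (\<lambda>t. mexp (t *\<^sub>R v))"
  define C where "C = v ** mpow (cadj v ** v) (n - 1)"
  define D where "D = mpow (cadj v ** v) n - mpow (v ** cadj v) n"
  have lv: "left_vel g t = v" if "t \<in> {0..1}" for t
    using left_vel_exp[OF that] by (simp add: g_def)
  have step: "((\<lambda>s. left_vel g s ** mpow (cadj (left_vel g s) ** left_vel g s) (n - 1)) has_vector_derivative
        (mpow (cadj (left_vel g t) ** left_vel g t) n - mpow (left_vel g t ** cadj (left_vel g t)) n))
       (at t within {0..1}) \<longleftrightarrow> ((\<lambda>s. C) has_vector_derivative D) (at t within {0..1})"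
    if t: "t \<in> {0..1}" for t
  proof -
    have "((\<lambda>s. left_vel g s ** mpow (cadj (left_vel g s) ** left_vel g s) (n - 1)) has_vector_derivative D)
       (at t within {0..1}) \<longleftrightarrow> ((\<lambda>s. C) has_vector_derivative D) (at t within {0..1})"
    proof
      assume "((\<lambda>s. left_vel g s ** mpow (cadj (left_vel g s) ** left_vel g s) (n - 1)) has_vector_derivative D)
       (at t within {0..1})"
      then show "((\<lambda>s. C) has_vector_derivative D) (at t within {0..1})"
        by (rule has_vector_derivative_transform[OF t, rotated]) (simp add: lv C_def)
    next
      assume "((\<lambda>s. C) has_vector_derivative D) (at t within {0..1})"
      then show "((\<lambda>s. left_vel g s ** mpow (cadj (left_vel g s) ** left_vel g s) (n - 1)) has_vector_derivative D)
       (at t within {0..1})"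
        by (rule has_vector_derivative_transform[OF t, rotated]) (simp add: lv C_def)
    qed
    then show ?thesis using lv[OF t] by (simp add: D_def)
  qed
  have "pEL n g \<longleftrightarrow> (\<forall>t\<in>{0..1}. ((\<lambda>s. C) has_vector_derivative D) (at t within {0..1}))"
    unfolding pEL_def using step by auto
  also have "\<dots> \<longleftrightarrow> D = 0"
  proof
    assume "\<forall>t\<in>{0..1}. ((\<lambda>s. C) has_vector_derivative D) (at t within {0..1})"
    then have "((\<lambda>s. C) has_vector_derivative D) (at 0 within cbox 0 1)" by simp
    moreover have "((\<lambda>s. C) has_vector_derivative 0) (at 0 within cbox 0 1)"
      by (rule has_vector_derivative_const)
    ultimately show "D = 0"
      by (rule vector_derivative_unique_within_closed_interval[of 0 1 0, rotated 2]) auto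
  next
    assume "D = 0"
    then show "\<forall>t\<in>{0..1}. ((\<lambda>s. C) has_vector_derivative D) (at t within {0..1})"
      by (simp add: has_vector_derivative_const)
  qed
  also have "\<dots> \<longleftrightarrow> normal_mat v"
  proof
    assume "D = 0"
    then show "normal_mat v" unfolding normal_mat_def
      by (intro normal_from_pow[OF _ assms]) (simp add: D_def)
  next
    assume "normal_mat v"
    then show "D = 0" by (simp add: D_def normal_mat_def)
  qed
  finally show ?thesis by (simp add: g_def)
qed

end
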